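(* Let $a\geqslant 1$ and let $\Omega$ be a subset of $\mathbb{Z}_{2a}$ such that for every $g\in\Omega$ one has $|g|>2$ and $-g\in\Omega$. Let $\Psi$ be an abelian group of order $2^\alpha$ with $\alpha\geqslant 2$. Then there exists a set $\mathcal{T}$ of $|\Omega|/2$ zero-sum arrays of size $2\times 2^\alpha$ with entries in $\mathbb{Z}_{2a}\oplus\Psi$ such that the list of all entries of the arrays of $\mathcal{T}$ (counted with multiplicity) is exactly $\{(x,y): x\in\Omega,\ y\in\Psi\}$, each element appearing once.
   Context: $|g|$ denotes the order of $g$. An array with entries in an abelian group is zero-sum if the sum of the entries in each row and in each column equals $0$. *)

theory Defs
  imports "HOL-Algebra.Algebra" "HOL-Library.Multiset"
begin

text \<open>Z_m is represented by the integers {0..<m}, with arithmetic mod m.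
  The additive order of g in Z_m.\<close>
definition zmod_ord :: "int \<Rightarrow> int \<Rightarrow> nat" where
  "zmod_ord m g = (LEAST k::nat. 0 < k \<and> (int k * g) mod m = 0)"

definition zero_sum_array :: "int \<Rightarrow> ('b, 'c) monoid_scheme \<Rightarrow> nat \<Rightarrow> (nat \<Rightarrow> nat \<Rightarrow> int \<times> 'b) \<Rightarrow> bool" where
  "zero_sum_array m Psi n A \<longleftrightarrow>
     (\<forall>i<2. (\<Sum>j<n. fst (A i j)) mod m = 0 \<and> finprod Psi (\<lambda>j. snd (A i j)) {..<n} = \<one>\<^bsub>Psi\<^esub>) \<and>
     (\<forall>j<n. (\<Sum>i<2. fst (A i j)) mod m = 0 \<and> finprod Psi (\<lambda>i. snd (A i j)) {..<2} = \<one>\<^bsub>Psi\<^esub>)"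

end

theory Submission
  imports Defs
begin

lemma invol_split:
  assumes "finite S" "\<forall>x\<in>S. \<sigma> x \<in> S \<and> \<sigma> x \<noteq> x \<and> \<sigma> (\<sigma> x) = x"
  shows "\<exists>R\<subseteq>S. R \<inter> \<sigma>`R = {} \<and> R \<union> \<sigma>`R = S"
  using assms
proof (induction S rule: finite_psubset_induct)
  case (psubset S)
  show ?case
  proof (cases "S = {}")
    case True then show ?thesis by auto
  next
    case False
    then obtain x where x: "x \<in> S" by auto
    have X: "\<sigma> x \<in> S" "\<sigma> x \<noteq> x" "\<sigma> (\<sigma> x) = x" using bspec[OF psubset.prems x] by blast+
    let ?S' = "S - {x, \<sigma> x}"
    have "?S' \<subset> S" using x by auto
    moreover have "\<forall>y\<in>?S'. \<sigma> y \<in> ?S' \<and> \<sigma> y \<noteq> y \<and> \<sigma> (\<sigma> y) = y"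
    proof
      fix y assume y: "y \<in> ?S'"
      have yS: "y \<in> S" "y \<noteq> x" "y \<noteq> \<sigma> x" using y by auto
      have P: "\<sigma> y \<in> S" "\<sigma> y \<noteq> y" "\<sigma> (\<sigma> y) = y" using bspec[OF psubset.prems yS(1)] by blast+
      have "\<sigma> y \<noteq> x"
      proof
        assume "\<sigma> y = x" then have "\<sigma> (\<sigma> y) = \<sigma> x" by simp
        then show False using P(3) yS(3) by simp
      qed
      moreover have "\<sigma> y \<noteq> \<sigma> x"
      proof
        assume "\<sigma> y = \<sigma> x" then have "\<sigma> (\<sigma> y) = \<sigma> (\<sigma> x)" by simp
        then show False using P(3) X(3) yS(2) by simp
      qed
      ultimately show "\<sigma> y \<in> ?S' \<and> \<sigma> y \<noteq> y \<and> \<sigma> (\<sigma> y) = y" using P by simp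
    qed
    ultimately have "\<exists>R\<subseteq>?S'. R \<inter> \<sigma>`R = {} \<and> R \<union> \<sigma>`R = ?S'"
      by (rule psubset.IH)
    then obtain R where R0: "R \<subseteq> ?S' \<and> R \<inter> \<sigma>`R = {} \<and> R \<union> \<sigma>`R = ?S'"
      by (elim exE) (rule that)
    have R: "R \<subseteq> ?S'" "R \<inter> \<sigma>`R = {}" "R \<union> \<sigma>`R = ?S'" using R0 by simp_all
    have sR: "\<sigma>`R \<subseteq> ?S'" using R(3) by blast
    have s1: "\<sigma> ` insert x R = insert (\<sigma> x) (\<sigma>`R)" by simp
    show ?thesis
    proof (rule exI[of _ "insert x R"], intro conjI)
      show "insert x R \<subseteq> S" using R(1) x by auto
      have n1: "x \<notin> \<sigma>`R" using sR by auto
      have n2: "\<sigma> x \<notin> R" using R(1) by auto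
      show "insert x R \<inter> \<sigma> ` insert x R = {}" unfolding s1 using R(2) X(2) n1 n2 by auto
      have "insert x R \<union> insert (\<sigma> x) (\<sigma>`R) = insert x (insert (\<sigma> x) (R \<union> \<sigma>`R))" by auto
      also have "\<dots> = S" unfolding R(3) using x X(1) by auto
      finally show "insert x R \<union> \<sigma> ` insert x R = S" unfolding s1 .
    qed
  qed
qed

lemma invol_card:
  assumes "finite S" "\<forall>x\<in>S. \<sigma> x \<in> S \<and> \<sigma> x \<noteq> x \<and> \<sigma> (\<sigma> x) = x"
    and "R \<subseteq> S" "R \<inter> \<sigma>`R = {}" "R \<union> \<sigma>`R = S"
  shows "card S = 2 * card R"
proof -
  have fR: "finite R" using assms finite_subset by blast
  have "inj_on \<sigma> R" using assms(2,3) by (metis inj_onI subsetD)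
  hence "card (\<sigma>`R) = card R" by (rule card_image)
  moreover have "card S = card R + card (\<sigma>`R)"
    using card_Un_disjoint[of R "\<sigma>`R"] fR assms(4,5) by auto
  ultimately show ?thesis by simp
qed

lemma sum_pairs:
  fixes f :: "nat \<Rightarrow> 'a::comm_monoid_add"
  shows "(\<Sum>j<2*h. f j) = (\<Sum>l<h. f (2*l) + f (2*l+1))"
  by (induction h) (auto simp: add.assoc)

lemma (in comm_monoid) finprod_pairs:
  fixes h :: nat
  assumes "f \<in> {..<2*h} \<rightarrow> carrier G"
  shows "finprod G f {..<2*h} = finprod G (\<lambda>l. f (2*l) \<otimes> f (2*l+1)) {..<h}"
  using assms
proof (induction h)
  case 0 then show ?case by simp
next
  case (Suc h)
  have e1: "{..<2*Suc h} = insert (2*h+1) (insert (2*h) {..<2*h})" by auto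
  have c: "f \<in> {..<2*h} \<rightarrow> carrier G" "f (2*h) \<in> carrier G" "f (2*h+1) \<in> carrier G"
    using Suc.prems by auto
  have "finprod G f {..<2*Suc h} = f (2*h+1) \<otimes> (f (2*h) \<otimes> finprod G f {..<2*h})"
    unfolding e1 using c by (simp add: Pi_def)
  also have "\<dots> = (f (2*h) \<otimes> f (2*h+1)) \<otimes> finprod G f {..<2*h}"
    using c by (simp add: m_ac)
  also have "\<dots> = finprod G (\<lambda>l. f (2*l) \<otimes> f (2*l+1)) {..<Suc h}"
    using Suc.IH[OF c(1)] c by (simp add: lessThan_Suc Pi_def m_ac)
  finally show ?case .
qed

lemma (in comm_monoid) finprod_two:
  fixes f :: "nat \<Rightarrow> 'a"
  assumes "f 0 \<in> carrier G" "f 1 \<in> carrier G"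
  shows "finprod G f {..<2} = f 0 \<otimes> f 1"
proof -
  have "{..<2::nat} = insert 0 (insert 1 {})" by auto
  thus ?thesis using assms by (simp add: Pi_def)
qed

lemma sum_singletons_inj:
  assumes "finite D" "inj_on F D"
  shows "(\<Sum>x\<in>D. {#F x#}) = mset_set (F ` D)"
  using assms by (simp add: sum_unfold_sum_mset image_mset_mset_set)


theorem lemma4p6:
  fixes a :: int and \<Omega> :: "int set" and Psi :: "('b, 'c) monoid_scheme" and \<alpha> :: nat
  assumes "a \<ge> 1"
    and "\<Omega> \<subseteq> {0..<2*a}"
    and "\<forall>g\<in>\<Omega>. zmod_ord (2*a) g > 2 \<and> (- g) mod (2*a) \<in> \<Omega>"
    and "comm_group Psi" and "finite (carrier Psi)" and "card (carrier Psi) = 2 ^ \<alpha>"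
    and "\<alpha> \<ge> 2"
  shows "\<exists>T :: nat \<Rightarrow> nat \<Rightarrow> nat \<Rightarrow> int \<times> 'b.
     (\<forall>k < card \<Omega> div 2. zero_sum_array (2*a) Psi (2 ^ \<alpha>) (T k)) \<and>
     (\<Sum>k < card \<Omega> div 2. \<Sum>i<2. \<Sum>j < 2 ^ \<alpha>. {# T k i j #}) = mset_set (\<Omega> \<times> carrier Psi)"
proof -
  define m where "m = 2*a"
  define neg where "neg g = (-g) mod m" for g
  interpret P: comm_group Psi by fact
  have m0: "m > 0" using assms(1) m_def by simp
  have finO: "finite \<Omega>" using assms(2) finite_subset by blast
  have negp: "\<forall>g\<in>\<Omega>. neg g \<in> \<Omega> \<and> neg g \<noteq> g \<and> neg (neg g) = g"
  proof
    fix g assume g: "g \<in> \<Omega>"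
    have gr: "0 \<le> g" "g < m" using g assms(2) m_def by auto
    have "neg g \<in> \<Omega>" using g assms(3) neg_def m_def by auto
    moreover have "neg g \<noteq> g"
    proof
      assume eq: "neg g = g"
      have "(int 2 * g) mod m = (g + (-g) mod m) mod m" using eq neg_def by simp
      also have "\<dots> = 0" by (simp add: mod_add_right_eq)
      finally have "(int 2 * g) mod m = 0" .
      hence "zmod_ord m g \<le> 2" unfolding zmod_ord_def by (intro Least_le) simp
      thus False using assms(3) g m_def by fastforce
    qed
    moreover have "neg (neg g) = g" unfolding neg_def using gr
      by (simp add: mod_minus_eq)
    ultimately show "neg g \<in> \<Omega> \<and> neg g \<noteq> g \<and> neg (neg g) = g" by blast
  qed
  obtain RO where RO: "RO \<subseteq> \<Omega>" "RO \<inter> neg`RO = {}" "RO \<union> neg`RO = \<Omega>"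
    using invol_split[OF finO negp] by blast
  have cO: "card \<Omega> div 2 = card RO" using invol_card[OF finO negp RO] by simp
  have "order Psi = 2^1 * 2^(\<alpha>-1)" using assms(6,7) unfolding order_def
    by (simp add: power_Suc[symmetric])
  then obtain H where H: "subgroup H Psi" "card H = 2"
    using sylow_thm[of 2 Psi 1 "2^(\<alpha>-1)"] assms(5) P.is_group by auto
  have oneH: "\<one>\<^bsub>Psi\<^esub> \<in> H" by (rule subgroup.one_closed[OF H(1)])
  obtain x y where xy: "H = {x,y}" "x \<noteq> y" using card_2_iff[THEN iffD1, OF H(2)] by blast
  have "\<exists>t\<in>H. t \<noteq> \<one>\<^bsub>Psi\<^esub>" using xy by auto
  then obtain t where t: "t \<in> H" "t \<noteq> \<one>\<^bsub>Psi\<^esub>" by blast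
  have Hs: "H = {\<one>\<^bsub>Psi\<^esub>, t}" using xy oneH t by auto
  have tc: "t \<in> carrier Psi" using t subgroup.subset[OF H(1)] by blast
  have "t \<otimes>\<^bsub>Psi\<^esub> t \<in> H" using subgroup.m_closed[OF H(1) t(1) t(1)] .
  moreover have "t \<otimes>\<^bsub>Psi\<^esub> t \<noteq> t" using t tc by simp
  ultimately have tt: "t \<otimes>\<^bsub>Psi\<^esub> t = \<one>\<^bsub>Psi\<^esub>" using Hs by blast
  have invt: "inv\<^bsub>Psi\<^esub> t = t" using P.inv_equality[OF tt tc tc] .
  define \<sigma> where "\<sigma> c = c \<otimes>\<^bsub>Psi\<^esub> t" for c
  have sp: "\<forall>c\<in>carrier Psi. \<sigma> c \<in> carrier Psi \<and> \<sigma> c \<noteq> c \<and> \<sigma> (\<sigma> c) = c"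
    unfolding \<sigma>_def using tc t tt by (simp add: P.m_assoc)
  obtain RP where RP: "RP \<subseteq> carrier Psi" "RP \<inter> \<sigma>`RP = {}" "RP \<union> \<sigma>`RP = carrier Psi"
    using invol_split[OF assms(5) sp] by blast
  define h where "h = card RP"
  have cP: "2^\<alpha> = 2 * h" using invol_card[OF assms(5) sp RP] assms(6) h_def by simp
  define \<beta> where "\<beta> = \<alpha> - 2"
  have ab: "\<alpha> = Suc (Suc \<beta>)" using assms(7) \<beta>_def by simp
  have hev: "h = 2 * 2^\<beta>" using cP unfolding ab by simp
  obtain e where e: "bij_betw e {0..<card RO} RO"
    using ex_bij_betw_nat_finite RO(1) finO finite_subset by blast
  obtain r where r: "bij_betw r {0..<h} RP"
    using ex_bij_betw_nat_finite RP(1) assms(5) finite_subset h_def by blast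
  define u where "u j = (if even j then r (j div 2) else r (j div 2) \<otimes>\<^bsub>Psi\<^esub> t)" for j
  define T where "T k i j = (if (i = (0::nat)) = even j then (e k, u j) else (neg (e k), inv\<^bsub>Psi\<^esub> u j))"
    for k i j
  have rc: "r l \<in> carrier Psi" if "l < h" for l using r RP(1) that by (auto simp: bij_betw_def)
  have uc: "u j \<in> carrier Psi" if "j < 2*h" for j
    using rc[of "j div 2"] that tc unfolding u_def by auto
  have ri: "inj_on r {0..<h}" using r bij_betw_def by blast
  have uinj: "j = j'" if jj: "j < 2*h" "j' < 2*h" "u j = u j'" for j j'
  proof -
    have ab: "j div 2 < h" "j' div 2 < h" using jj by auto
    have rin: "r (j div 2) \<in> RP" "r (j' div 2) \<in> RP" using r ab by (auto simp: bij_betw_def)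
    have par: "even j = even j'"
    proof (rule ccontr)
      assume ne: "even j \<noteq> even j'"
      have "\<exists>p\<in>RP. \<exists>q\<in>RP. p = \<sigma> q"
      proof (cases "even j")
        case True
        then have "r (j div 2) = \<sigma> (r (j' div 2))" using ne jj(3) unfolding u_def \<sigma>_def by simp
        then show ?thesis using rin by blast
      next
        case False
        then have "r (j' div 2) = \<sigma> (r (j div 2))" using ne jj(3) unfolding u_def \<sigma>_def by simp
        then show ?thesis using rin by blast
      qed
      thus False using RP(2) by blast
    qed
    have "r (j div 2) = r (j' div 2)"
      using jj(3) par rc ab tc unfolding u_def by (auto split: if_splits)
    hence "j div 2 = j' div 2" using ri ab by (auto dest: inj_onD)
    moreover have "j mod 2 = j' mod 2" using par by (metis even_iff_mod_2_eq_zero odd_iff_mod_2_eq_one)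
    ultimately show "j = j'" by (metis div_mult_mod_eq)
  qed
  define M where "M = card RO"
  have eRO: "e k \<in> RO" if "k < M" for k using e that M_def by (auto simp: bij_betw_def)
  have ei: "inj_on e {0..<M}" using e M_def bij_betw_def by blast
  have Tin: "T k i j \<in> \<Omega> \<times> carrier Psi" if "k < M" "j < 2*h" for k i j
    using eRO[OF that(1)] RO(1) negp uc[OF that(2)] unfolding T_def by auto
  have Tinj: "k = k' \<and> i = i' \<and> j = j'"
    if tt: "k<M" "k'<M" "i<2" "i'<2" "j<2*h" "j'<2*h" "T k i j = T k' i' j'" for k k' i i' j j'
  proof -
    have ek: "e k \<in> RO" "e k' \<in> RO" using eRO tt by auto
    have p: "((i=0) = even j) = ((i'=0) = even j')"
    proof (rule ccontr)
      assume "\<not> ?thesis"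
      then have "e k = neg (e k') \<or> neg (e k) = e k'" using tt(7) by (auto simp: T_def split: if_splits)
      then have "e k \<in> neg`RO \<or> e k' \<in> neg`RO" using ek by (metis imageI)
      moreover have "e k \<notin> neg`RO" "e k' \<notin> neg`RO" using RO(2) ek by auto
      ultimately show False by blast
    qed
    have "e k = e k' \<and> u j = u j'"
    proof (cases "(i=0) = even j")
      case True
      then show ?thesis using p tt(7) by (simp add: T_def)
    next
      case False
      then have "neg (e k) = neg (e k')" "inv\<^bsub>Psi\<^esub> u j = inv\<^bsub>Psi\<^esub> u j'"
        using p tt(7) by (simp_all add: T_def)
      moreover have "e k \<in> \<Omega>" "e k' \<in> \<Omega>" using ek RO(1) by auto
      ultimately have "e k = e k'" using negp by metis
      moreover have "u j = u j'"
        using \<open>inv\<^bsub>Psi\<^esub> u j = inv\<^bsub>Psi\<^esub> u j'\<close> uc[OF tt(5)] uc[OF tt(6)]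
        by (metis P.inv_inv)
      ultimately show ?thesis by blast
    qed
    then have eq: "e k = e k'" "u j = u j'" by auto
    have "k = k'" using inj_onD[OF ei eq(1)] tt(1,2) by auto
    moreover have "j = j'" using uinj[OF tt(5,6) eq(2)] .
    moreover have "(i=0) = (i'=0)" using p \<open>j = j'\<close> by (cases "even j'") auto
    then have "i = i'" using tt(3,4) by (cases "i = 0") auto
    ultimately show ?thesis by blast
  qed
  have modz: "(x * (g + (-g) mod m)) mod m = 0" for x g :: int
  proof -
    have "(g + (-g) mod m) mod m = 0" by (simp add: mod_add_right_eq)
    hence "x * ((g + (-g) mod m) mod m) mod m = 0" by simp
    thus ?thesis by (simp add: mod_mult_right_eq)
  qed
  have tpow: "t [^]\<^bsub>Psi\<^esub> h = \<one>\<^bsub>Psi\<^esub>"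
  proof -
    have "t [^]\<^bsub>Psi\<^esub> h = (t [^]\<^bsub>Psi\<^esub> (2::nat)) [^]\<^bsub>Psi\<^esub> (2^\<beta>::nat)"
      using hev tc by (simp add: P.nat_pow_pow)
    also have "t [^]\<^bsub>Psi\<^esub> (2::nat) = \<one>\<^bsub>Psi\<^esub>" using tt tc by (simp add: numeral_2_eq_2)
    finally show ?thesis by simp
  qed
  have zs: "zero_sum_array (2*a) Psi (2 ^ \<alpha>) (T k)" if k: "k < M" for k
    unfolding zero_sum_array_def cP m_def[symmetric]
  proof (intro conjI allI impI)
    fix i :: nat assume i: "i < 2"
    have "(\<Sum>j<2*h. fst (T k i j)) = (\<Sum>l<h. fst (T k i (2*l)) + fst (T k i (2*l+1)))"
      by (rule sum_pairs)
    also have "\<dots> = (\<Sum>l<h. e k + neg (e k))"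
      using i by (intro sum.cong) (auto simp: T_def)
    also have "\<dots> = of_nat h * (e k + neg (e k))" by simp
    finally show "(\<Sum>j<2*h. fst (T k i j)) mod m = 0" using modz neg_def by simp
    have fc: "(\<lambda>j. snd (T k i j)) \<in> {..<2*h} \<rightarrow> carrier Psi" using uc by (auto simp: T_def)
    have "finprod Psi (\<lambda>j. snd (T k i j)) {..<2*h}
        = finprod Psi (\<lambda>l. snd (T k i (2*l)) \<otimes>\<^bsub>Psi\<^esub> snd (T k i (2*l+1))) {..<h}"
      by (rule P.finprod_pairs[OF fc])
    also have "\<dots> = finprod Psi (\<lambda>l. t) {..<h}"
    proof (rule P.finprod_cong')
      show "(\<lambda>l. t) \<in> {..<h} \<rightarrow> carrier Psi" using tc by auto
      fix l assume l: "l \<in> {..<h}"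
      have rl: "r l \<in> carrier Psi" using rc l by auto
      show "snd (T k i (2*l)) \<otimes>\<^bsub>Psi\<^esub> snd (T k i (2*l+1)) = t"
      proof (cases "i = 0")
        case True
        have "snd (T k i (2*l)) = r l" "snd (T k i (2*l+1)) = inv\<^bsub>Psi\<^esub> (r l \<otimes>\<^bsub>Psi\<^esub> t)"
          using True by (simp_all add: T_def u_def)
        moreover have "r l \<otimes>\<^bsub>Psi\<^esub> inv\<^bsub>Psi\<^esub> (r l \<otimes>\<^bsub>Psi\<^esub> t) = r l \<otimes>\<^bsub>Psi\<^esub> (inv\<^bsub>Psi\<^esub> t \<otimes>\<^bsub>Psi\<^esub> inv\<^bsub>Psi\<^esub> r l)"
          using rl tc by (simp add: P.inv_mult_group)
        moreover have "\<dots> = inv\<^bsub>Psi\<^esub> t \<otimes>\<^bsub>Psi\<^esub> (r l \<otimes>\<^bsub>Psi\<^esub> inv\<^bsub>Psi\<^esub> r l)"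
          using rl tc by (intro P.m_lcomm) simp_all
        moreover have "\<dots> = t" using rl tc invt by simp
        ultimately show ?thesis by simp
      next
        case False
        have "snd (T k i (2*l)) = inv\<^bsub>Psi\<^esub> r l" "snd (T k i (2*l+1)) = r l \<otimes>\<^bsub>Psi\<^esub> t"
          using False by (simp_all add: T_def u_def)
        moreover have "inv\<^bsub>Psi\<^esub> r l \<otimes>\<^bsub>Psi\<^esub> (r l \<otimes>\<^bsub>Psi\<^esub> t) = t"
          using rl tc by (simp add: P.m_assoc[symmetric])
        ultimately show ?thesis by simp
      qed
    qed simp
    also have "\<dots> = \<one>\<^bsub>Psi\<^esub>" using tc tpow by (simp add: P.finprod_const)
    finally show "finprod Psi (\<lambda>j. snd (T k i j)) {..<2*h} = \<one>\<^bsub>Psi\<^esub>" .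
  next
    fix j assume j: "j < 2*h"
    have two: "{..<2::nat} = {0,1}" by auto
    show "(\<Sum>i<2. fst (T k i j)) mod m = 0"
      unfolding two using modz[of 1 "e k"] by (auto simp: T_def neg_def add.commute)
    show "finprod Psi (\<lambda>i. snd (T k i j)) {..<2} = \<one>\<^bsub>Psi\<^esub>"
      using uc[OF j] by (subst P.finprod_two) (auto simp: T_def)
  qed
  define D where "D = {..<M} \<times> {..<2::nat} \<times> {..<2*h}"
  define F where "F = (\<lambda>(k,i,j). T k i j)"
  have finD: "finite D" unfolding D_def by simp
  have Fi: "inj_on F D" unfolding D_def F_def
  proof (rule inj_onI)
    fix x y assume xy: "x \<in> {..<M} \<times> {..<2::nat} \<times> {..<2*h}" "y \<in> {..<M} \<times> {..<2::nat} \<times> {..<2*h}"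
      "(\<lambda>(k,i,j). T k i j) x = (\<lambda>(k,i,j). T k i j) y"
    obtain k i j where x: "x = (k,i,j)" by (cases x) auto
    obtain k' i' j' where y: "y = (k',i',j')" by (cases y) auto
    have "k = k' \<and> i = i' \<and> j = j'"
      by (rule Tinj) (use xy x y in auto)
    then show "x = y" using x y by simp
  qed
  have FD: "F ` D \<subseteq> \<Omega> \<times> carrier Psi" unfolding D_def F_def image_subset_iff using Tin by auto
  have "card (F ` D) = card D" using card_image[OF Fi] .
  also have "\<dots> = M * (2 * (2*h))" unfolding D_def by (simp add: card_cartesian_product)
  also have "\<dots> = card (\<Omega> \<times> carrier Psi)"
    using invol_card[OF finO negp RO] cP assms(6) M_def by (simp add: card_cartesian_product)
  finally have FDe: "F ` D = \<Omega> \<times> carrier Psi"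
    using card_subset_eq[OF _ FD] finO assms(5) by auto
  have "(\<Sum>k<M. \<Sum>i<2. \<Sum>j<2*h. {# T k i j #}) = (\<Sum>x\<in>D. {# F x #})"
    unfolding D_def F_def by (simp add: sum.cartesian_product split_def)
  also have "\<dots> = mset_set (\<Omega> \<times> carrier Psi)"
    using sum_singletons_inj[OF finD Fi] FDe by simp
  finally have ms: "(\<Sum>k<M. \<Sum>i<2. \<Sum>j<2*h. {# T k i j #}) = mset_set (\<Omega> \<times> carrier Psi)" .
  have cM: "card \<Omega> div 2 = M" using cO M_def by simp
  have A: "\<forall>k<card \<Omega> div 2. zero_sum_array (2*a) Psi (2^\<alpha>) (T k)" unfolding cM using zs by blast
  have B: "(\<Sum>k<card \<Omega> div 2. \<Sum>i<2. \<Sum>j<2^\<alpha>. {#T k i j#}) = mset_set (\<Omega> \<times> carrier Psi)"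
    unfolding cM cP by (rule ms)
  show ?thesis by (rule exI[of _ T], rule conjI[OF A B])
qed

end
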